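(* Let $t\le 1/2$ be a positive rational number and let $G$ be a minimally $t$-tough split graph whose vertex set is partitioned into a clique $C$ and an independent set $I$. Then there exists a positive integer $b$ such that $t=1/b$ and $|C|\le 3$. Moreover, either (1) $G$ is a tree with at most two internal (non-leaf) vertices and with maximum degree $\Delta(G)=b$, or (2) $|C|=3$, every vertex in $I$ has degree $1$, and every vertex in $C$ has degree $b+1$.
   Context: All graphs are finite, simple and undirected. A graph is split if its vertex set can be partitioned into a clique and an independent set. $\omega(H)$ denotes the number of components of $H$. A cutset of $G$ is a vertex set $S$ with $G-S$ disconnected. For positive real $t$, $G$ is $t$-tough if $\omega(G-S)\le |S|/t$ for every cutset $S$; the toughness $\tau(G)$ is the largest such $t$, with $\tau(K_n)=\infty$ for all $n\ge1$. $G$ is minimally $t$-tough if $\tau(G)=t$ and $\tau(G-e)<t$ for every edge $e$ of $G$. *)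

theory Defs
  imports Complex_Main "HOL-Library.Extended_Real"
begin

definition graph :: "'a set \<Rightarrow> 'a set set \<Rightarrow> bool" where
  "graph V E \<longleftrightarrow> finite V \<and> (\<forall>e\<in>E. \<exists>u v. u \<noteq> v \<and> u \<in> V \<and> v \<in> V \<and> e = {u, v})"

definition degree :: "'a set \<Rightarrow> 'a set set \<Rightarrow> 'a \<Rightarrow> nat" where
  "degree V E v = card {u \<in> V. {u, v} \<in> E}"

definition max_degree :: "'a set \<Rightarrow> 'a set set \<Rightarrow> nat" where
  "max_degree V E = Max (degree V E ` V)"

definition reach_in :: "'a set \<Rightarrow> 'a set set \<Rightarrow> 'a \<Rightarrow> 'a \<Rightarrow> bool" where
  "reach_in W E = (\<lambda>x y. x \<in> W \<and> y \<in> W \<and> {x, y} \<in> E)\<^sup>*\<^sup>*"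

definition components :: "'a set \<Rightarrow> 'a set set \<Rightarrow> 'a set set" where
  "components W E = {{y \<in> W. reach_in W E x y} | x. x \<in> W}"

definition num_comp :: "'a set \<Rightarrow> 'a set set \<Rightarrow> 'a set \<Rightarrow> nat" where
  "num_comp V E S = card (components (V - S) E)"

definition connected_graph :: "'a set \<Rightarrow> 'a set set \<Rightarrow> bool" where
  "connected_graph V E \<longleftrightarrow> V \<noteq> {} \<and> (\<forall>x\<in>V. \<forall>y\<in>V. reach_in V E x y)"

definition cutset :: "'a set \<Rightarrow> 'a set set \<Rightarrow> 'a set \<Rightarrow> bool" where
  "cutset V E S \<longleftrightarrow> S \<subseteq> V \<and> num_comp V E S \<ge> 2"

definition tough :: "real \<Rightarrow> 'a set \<Rightarrow> 'a set set \<Rightarrow> bool" where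
  "tough t V E \<longleftrightarrow> (\<forall>S. cutset V E S \<longrightarrow> real (num_comp V E S) \<le> real (card S) / t)"

text \<open>Toughness: the largest t such that G is t-tough (infinity if G has no cutset,
  e.g. complete graphs; 0 if no positive t works, i.e. disconnected graphs).\<close>
definition toughness :: "'a set \<Rightarrow> 'a set set \<Rightarrow> ereal" where
  "toughness V E = Sup ({0} \<union> {ereal t | t. t > 0 \<and> tough t V E})"

definition minimally_tough :: "real \<Rightarrow> 'a set \<Rightarrow> 'a set set \<Rightarrow> bool" where
  "minimally_tough t V E \<longleftrightarrow>
     toughness V E = ereal t \<and> (\<forall>e\<in>E. toughness V (E - {e}) < ereal t)"

definition is_clique :: "'a set set \<Rightarrow> 'a set \<Rightarrow> bool" where
  "is_clique E C \<longleftrightarrow> (\<forall>u\<in>C. \<forall>v\<in>C. u \<noteq> v \<longrightarrow> {u, v} \<in> E)"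

definition is_independent :: "'a set set \<Rightarrow> 'a set \<Rightarrow> bool" where
  "is_independent E I \<longleftrightarrow> (\<forall>u\<in>I. \<forall>v\<in>I. {u, v} \<notin> E)"

definition split_partition :: "'a set \<Rightarrow> 'a set set \<Rightarrow> 'a set \<Rightarrow> 'a set \<Rightarrow> bool" where
  "split_partition V E C I \<longleftrightarrow> C \<union> I = V \<and> C \<inter> I = {} \<and> is_clique E C \<and> is_independent E I"

definition is_cycle :: "'a set \<Rightarrow> 'a set set \<Rightarrow> 'a list \<Rightarrow> bool" where
  "is_cycle V E xs \<longleftrightarrow> length xs \<ge> 3 \<and> distinct xs \<and> set xs \<subseteq> V \<and>
     (\<forall>i. Suc i < length xs \<longrightarrow> {xs ! i, xs ! Suc i} \<in> E) \<and> {last xs, hd xs} \<in> E"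

definition is_tree :: "'a set \<Rightarrow> 'a set set \<Rightarrow> bool" where
  "is_tree V E \<longleftrightarrow> connected_graph V E \<and> \<not> (\<exists>xs. is_cycle V E xs)"

definition internal_vertices :: "'a set \<Rightarrow> 'a set set \<Rightarrow> 'a set" where
  "internal_vertices V E = {v \<in> V. degree V E v \<noteq> 1}"

end

theory Submission
  imports Defs
begin

definition cmp :: "'a set \<Rightarrow> 'a set set \<Rightarrow> 'a \<Rightarrow> 'a set" where
  "cmp W F x = {y \<in> W. reach_in W F x y}"

lemma components_eq: "components W F = cmp W F ` W"
  by (auto simp: components_def cmp_def)

lemma reach_sym: "reach_in W F x y \<Longrightarrow> reach_in W F y x"
  unfolding reach_in_def
  by (induction rule: rtranclp_induct)
     (auto simp: insert_commute intro: converse_rtranclp_into_rtranclp)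

lemma reach_trans: "reach_in W F x y \<Longrightarrow> reach_in W F y z \<Longrightarrow> reach_in W F x z"
  unfolding reach_in_def by (rule rtranclp_trans)

lemma reach_refl: "reach_in W F x x"
  unfolding reach_in_def by simp

lemma reach_edge: "x \<in> W \<Longrightarrow> y \<in> W \<Longrightarrow> {x,y} \<in> F \<Longrightarrow> reach_in W F x y"
  unfolding reach_in_def by (rule r_into_rtranclp) simp

lemma cmp_eq: "reach_in W F x z \<Longrightarrow> cmp W F x = cmp W F z"
  unfolding cmp_def by (auto intro: reach_trans reach_sym)

lemma cmp_isolated:
  assumes "x \<in> W" "\<forall>z\<in>W. {x,z} \<notin> F"
  shows "cmp W F x = {x}"
proof -
  have "reach_in W F x y \<Longrightarrow> y = x" for y
    unfolding reach_in_def
    by (induction rule: rtranclp_induct) (use assms in auto)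
  then show ?thesis using assms unfolding cmp_def by (auto intro: reach_refl)
qed

lemma cmp_self: "x \<in> W \<Longrightarrow> x \<in> cmp W F x"
  unfolding cmp_def by (simp add: reach_refl)

locale splitg =
  fixes V :: "'a set" and E :: "'a set set" and C I :: "'a set"
  assumes gr: "graph V E" and sp: "split_partition V E C I"
begin

definition Z :: "'a set set \<Rightarrow> 'a set \<Rightarrow> 'a set" where
  "Z F S = {y \<in> I - S. \<forall>x \<in> V - S. {x,y} \<notin> F}"

lemma finV: "finite V" using gr by (simp add: graph_def)
lemma VCI: "V = C \<union> I" using sp by (simp add: split_partition_def)
lemma disj: "C \<inter> I = {}" using sp by (simp add: split_partition_def)
lemma cliq: "u \<in> C \<Longrightarrow> v \<in> C \<Longrightarrow> u \<noteq> v \<Longrightarrow> {u,v} \<in> E"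
  using sp by (simp add: split_partition_def is_clique_def)
lemma indep: "u \<in> I \<Longrightarrow> v \<in> I \<Longrightarrow> {u,v} \<notin> E"
  using sp by (simp add: split_partition_def is_independent_def)
lemma finC: "finite C" using finV VCI by (metis finite_Un)
lemma finI: "finite I" using finV VCI by (metis finite_Un)

lemma edge_props: "{u,v} \<in> E \<Longrightarrow> u \<noteq> v \<and> u \<in> V \<and> v \<in> V"
  using gr unfolding graph_def by (fastforce simp: doubleton_eq_iff)

lemma nbr_C: "y \<in> I \<Longrightarrow> {x,y} \<in> E \<Longrightarrow> x \<in> C"
  using edge_props[of x y] indep[of x y] VCI by auto

lemma comps_sub:
  assumes "F \<subseteq> E" "S \<subseteq> V"
  shows "components (V - S) F \<subseteq> cmp (V - S) F ` (C - S) \<union> (\<lambda>y. {y}) ` Z F S"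
proof
  fix K assume "K \<in> components (V - S) F"
  then obtain x where x: "x \<in> V - S" "K = cmp (V - S) F x" by (auto simp: components_eq)
  show "K \<in> cmp (V - S) F ` (C - S) \<union> (\<lambda>y. {y}) ` Z F S"
  proof (cases "x \<in> C")
    case True then show ?thesis using x by auto
  next
    case False
    then have xI: "x \<in> I" using x VCI by auto
    show ?thesis
    proof (cases "\<exists>z \<in> V - S. {z,x} \<in> F")
      case True
      then obtain z where z: "z \<in> V - S" "{z,x} \<in> F" by auto
      have "z \<in> C" using nbr_C[OF xI] z assms(1) by auto
      moreover have "reach_in (V - S) F x z"
        using reach_edge[of x "V - S" z F] x z by (simp add: insert_commute)
      then have "K = cmp (V - S) F z" using x cmp_eq by metis
      ultimately show ?thesis using z by auto
    next
      case False
      then have "x \<in> Z F S" using x xI by (auto simp: Z_def)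
      moreover have "K = {x}" using x False cmp_isolated[of x "V - S" F]
        by (auto simp: insert_commute)
      ultimately show ?thesis by auto
    qed
  qed
qed

lemma finZ: "finite (Z F S)" using finI by (auto simp: Z_def)

lemma fin_comps: "finite (components (V - S) F)"
  by (simp add: components_eq finV)

lemma card_comps_ub:
  assumes "F \<subseteq> E" "S \<subseteq> V"
  shows "card (components (V - S) F) \<le> card (cmp (V - S) F ` (C - S)) + card (Z F S)"
proof -
  have "card (components (V - S) F) \<le> card (cmp (V - S) F ` (C - S) \<union> (\<lambda>y. {y}) ` Z F S)"
    by (rule card_mono) (use comps_sub[OF assms] finC finZ in auto)
  also have "\<dots> \<le> card (cmp (V - S) F ` (C - S)) + card ((\<lambda>y. {y}) ` Z F S)"
    by (rule card_Un_le)
  also have "card ((\<lambda>y. {y}) ` Z F S) \<le> card (Z F S)" by (rule card_image_le[OF finZ])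
  finally show ?thesis by simp
qed

lemma card_comps_lb:
  assumes "F \<subseteq> E" "S \<subseteq> V"
  shows "(if C \<subseteq> S then 0 else 1) + card (Z F S) \<le> card (components (V - S) F)"
proof -
  have sing: "(\<lambda>y. {y}) ` Z F S \<subseteq> components (V - S) F"
  proof
    fix K assume "K \<in> (\<lambda>y. {y}) ` Z F S"
    then obtain y where y: "y \<in> Z F S" "K = {y}" by auto
    then have "y \<in> V - S" using VCI unfolding Z_def by auto
    moreover have "cmp (V - S) F y = {y}"
      using y \<open>y \<in> V - S\<close> by (intro cmp_isolated) (auto simp: Z_def insert_commute)
    ultimately show "K \<in> components (V - S) F" using y by (auto simp: components_eq)
  qed
  have cz: "card ((\<lambda>y. {y}) ` Z F S) = card (Z F S)"
    by (rule card_image) (auto simp: inj_on_def)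
  show ?thesis
  proof (cases "C \<subseteq> S")
    case True
    then show ?thesis using card_mono[OF fin_comps sing] cz by simp
  next
    case False
    then obtain a where a: "a \<in> C" "a \<notin> S" by auto
    then have aV: "a \<in> V - S" using VCI by auto
    have notin: "cmp (V - S) F a \<notin> (\<lambda>y. {y}) ` Z F S"
    proof
      assume "cmp (V - S) F a \<in> (\<lambda>y. {y}) ` Z F S"
      then obtain y where "y \<in> Z F S" "cmp (V - S) F a = {y}" by auto
      then show False using cmp_self[OF aV, of F] a disj by (auto simp: Z_def)
    qed
    have "insert (cmp (V - S) F a) ((\<lambda>y. {y}) ` Z F S) \<subseteq> components (V - S) F"
      using sing aV by (auto simp: components_eq)
    from card_mono[OF fin_comps this] have
      "card (insert (cmp (V - S) F a) ((\<lambda>y. {y}) ` Z F S)) \<le> card (components (V - S) F)" .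
    then show ?thesis using notin cz False finZ by simp
  qed
qed

lemma nc_E:
  assumes "S \<subseteq> V"
  shows "num_comp V E S = (if C \<subseteq> S then 0 else 1) + card (Z E S)"
proof -
  have "card (cmp (V - S) E ` (C - S)) \<le> (if C \<subseteq> S then 0 else 1)"
  proof (cases "C \<subseteq> S")
    case True then have e: "C - S = {}" by auto
    show ?thesis unfolding e using True by simp
  next
    case False
    then obtain a where a: "a \<in> C" "a \<notin> S" by auto
    have "cmp (V - S) E ` (C - S) \<subseteq> {cmp (V - S) E a}"
    proof
      fix K assume "K \<in> cmp (V - S) E ` (C - S)"
      then obtain b where b: "b \<in> C - S" "K = cmp (V - S) E b" by auto
      show "K \<in> {cmp (V - S) E a}"
      proof (cases "b = a")
        case False
        then have "reach_in (V - S) E b a" using a b cliq[of b a] VCI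
          by (intro reach_edge) auto
        then have "cmp (V - S) E b = cmp (V - S) E a" by (rule cmp_eq)
        then show ?thesis using b by auto
      qed (use b in auto)
    qed
    then have "card (cmp (V - S) E ` (C - S)) \<le> card {cmp (V - S) E a}"
      by (rule card_mono[rotated]) simp
    then show ?thesis using False by simp
  qed
  then show ?thesis
    using card_comps_ub[OF order_refl assms] card_comps_lb[OF order_refl assms]
    unfolding num_comp_def by linarith
qed

lemma Z_minus:
  assumes "u \<in> C" "w \<in> C"
  shows "Z (E - {{u,w}}) S = Z E S"
  using assms disj unfolding Z_def by (auto simp: doubleton_eq_iff)

end

locale mt = splitg +
  fixes t :: real
  assumes tpos: "t > 0" and thalf: "t \<le> 1/2" and tgh: "tough t V E"
    and sup: "\<And>t'. t' > 0 \<Longrightarrow> tough t' V E \<Longrightarrow> t' \<le> t"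
    and wit: "\<And>e. e \<in> E \<Longrightarrow> \<exists>S. cutset V (E - {e}) S \<and>
                 real (card S) < t * real (num_comp V (E - {e}) S)"
begin

lemma tough_use: "cutset V E S \<Longrightarrow> t * real (num_comp V E S) \<le> real (card S)"
  using tgh tpos unfolding tough_def by (auto simp: pos_le_divide_eq mult.commute)

lemma edge_lemma:
  assumes u: "u \<in> C" and w: "w \<in> C" and uw: "u \<noteq> w"
  shows "\<exists>S. S \<subseteq> V \<and> u \<notin> S \<and> w \<notin> S \<and> C - {u,w} \<subseteq> S \<and>
             (\<forall>v\<in>I. {u,v} \<in> E \<longrightarrow> {w,v} \<in> E \<longrightarrow> v \<in> S) \<and>
             real (card S) < t * (2 + real (card (Z E S)))"
proof -
  define e where "e = {u,w}"
  have eE: "e \<in> E" using cliq u w uw by (auto simp: e_def)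
  obtain S where cut: "cutset V (E - {e}) S"
    and lt: "real (card S) < t * real (num_comp V (E - {e}) S)" using wit[OF eE] by auto
  have SV: "S \<subseteq> V" using cut by (simp add: cutset_def)
  have ub: "num_comp V (E - {e}) S \<le> card (cmp (V - S) (E - {e}) ` (C - S)) + card (Z E S)"
    using card_comps_ub[of "E - {e}" S] SV Z_minus[OF u w, of S]
    unfolding num_comp_def e_def by auto
  show ?thesis
  proof (cases "u \<notin> S \<and> w \<notin> S \<and> C - S \<subseteq> {u,w} \<and> (\<forall>v\<in>I. {u,v}\<in>E \<longrightarrow> {w,v}\<in>E \<longrightarrow> v\<in>S)")
    case True
    have "card (C - S) \<le> card {u,w}" using True by (intro card_mono) auto
    also have "\<dots> = 2" using uw by simp
    finally have "card (cmp (V - S) (E - {e}) ` (C - S)) \<le> 2"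
      using card_image_le[of "C - S" "cmp (V - S) (E - {e})"] finC by simp
    then have "num_comp V (E - {e}) S \<le> 2 + card (Z E S)" using ub by simp
    then have "real (num_comp V (E - {e}) S) \<le> 2 + real (card (Z E S))" by simp
    then have "t * real (num_comp V (E - {e}) S) \<le> t * (2 + real (card (Z E S)))"
      using tpos by (intro mult_left_mono) auto
    then show ?thesis using True lt SV by (intro exI[of _ S]) auto
  next
    case False
    have path: "reach_in (V - S) (E - {e}) a b"
      if "a \<in> V - S" "b \<in> V - S" "x \<in> V - S" "x \<notin> {u,w}" "{a,x} \<in> E" "{x,b} \<in> E" for a b x
    proof -
      have "reach_in (V - S) (E - {e}) a x"
        using that by (intro reach_edge) (auto simp: e_def doubleton_eq_iff)
      moreover have "reach_in (V - S) (E - {e}) x b"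
        using that by (intro reach_edge) (auto simp: e_def doubleton_eq_iff)
      ultimately show ?thesis by (rule reach_trans)
    qed
    have reach: "reach_in (V - S) (E - {e}) a b" if a: "a \<in> C - S" and b: "b \<in> C - S" for a b
    proof (cases "a = b")
      case True then show ?thesis by (simp add: reach_refl)
    next
      case ab: False
      show ?thesis
      proof (cases "{a,b} = e")
        case False
        then show ?thesis using a b ab cliq[of a b] VCI by (intro reach_edge) auto
      next
        case True
        then have uwab: "(a = u \<and> b = w) \<or> (a = w \<and> b = u)" by (auto simp: e_def doubleton_eq_iff)
        then have "u \<notin> S" "w \<notin> S" using a b by auto
        with False have "\<not> C - S \<subseteq> {u,w} \<or> (\<exists>v\<in>I. {u,v}\<in>E \<and> {w,v}\<in>E \<and> v \<notin> S)" by auto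
        then obtain x where x: "x \<in> V - S" "x \<notin> {u,w}" "{a,x} \<in> E" "{x,b} \<in> E"
        proof
          assume "\<not> C - S \<subseteq> {u,w}"
          then obtain x where "x \<in> C - S" "x \<notin> {u,w}" by auto
          moreover have "{a,x} \<in> E" "{x,b} \<in> E" using calculation uwab a b cliq VCI by auto
          ultimately show ?thesis using that VCI by auto
        next
          assume "\<exists>v\<in>I. {u,v}\<in>E \<and> {w,v}\<in>E \<and> v \<notin> S"
          then obtain v where v: "v \<in> I" "{u,v}\<in>E" "{w,v}\<in>E" "v \<notin> S" by auto
          have "v \<notin> {u,w}" using v(1) u w disj by auto
          moreover have "{a,v} \<in> E" "{v,b} \<in> E" using v uwab by (auto simp: insert_commute)
          ultimately show ?thesis using that v VCI by auto
        qed
        then show ?thesis using path a b VCI by blast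
      qed
    qed
    have "card (cmp (V - S) (E - {e}) ` (C - S)) \<le> (if C \<subseteq> S then 0 else 1)"
    proof (cases "C \<subseteq> S")
      case True then have ee: "C - S = {}" by auto
      show ?thesis unfolding ee using True by simp
    next
      case False
      then obtain a where a: "a \<in> C - S" by auto
      have "cmp (V - S) (E - {e}) ` (C - S) \<subseteq> {cmp (V - S) (E - {e}) a}"
      proof
        fix K assume "K \<in> cmp (V - S) (E - {e}) ` (C - S)"
        then obtain b where b: "b \<in> C - S" "K = cmp (V - S) (E - {e}) b" by auto
        have "cmp (V - S) (E - {e}) b = cmp (V - S) (E - {e}) a"
          by (rule cmp_eq) (rule reach[OF b(1) a])
        then show "K \<in> {cmp (V - S) (E - {e}) a}" using b by simp
      qed
      then have "card (cmp (V - S) (E - {e}) ` (C - S)) \<le> card {cmp (V - S) (E - {e}) a}"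
        by (rule card_mono[rotated]) simp
      then show ?thesis using False by simp
    qed
    then have le: "num_comp V (E - {e}) S \<le> num_comp V E S"
      using ub nc_E[OF SV] by simp
    then have "cutset V E S" using cut SV by (auto simp: cutset_def)
    then have "t * real (num_comp V E S) \<le> real (card S)" by (rule tough_use)
    moreover have "t * real (num_comp V (E - {e}) S) \<le> t * real (num_comp V E S)"
      using le tpos by (intro mult_left_mono) auto
    ultimately show ?thesis using lt by linarith
  qed
qed

end

context mt begin

lemma C_ne: "C \<noteq> {}"
proof
  assume C0: "C = {}"
  have "Z E {} = I" using C0 nbr_C by (auto simp: Z_def)
  have nc0: "num_comp V E {} = card I" using nc_E[of "{}"] C0 \<open>Z E {} = I\<close> by simp
  have "card I \<le> 1"
  proof (rule ccontr)
    assume "\<not> card I \<le> 1"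
    then have "cutset V E {}" using nc0 by (simp add: cutset_def)
    from tough_use[OF this] have "t * real (card I) \<le> 0" using nc0 by simp
    then show False using tpos \<open>\<not> card I \<le> 1\<close>
      by (simp add: mult_le_0_iff)
  qed
  have "tough 1 V E"
    unfolding tough_def
  proof (intro allI impI)
    fix S assume cS: "cutset V E S"
    then have SV: "S \<subseteq> V" by (simp add: cutset_def)
    have "card (Z E S) \<le> card I" by (rule card_mono[OF finI]) (auto simp: Z_def)
    then have "num_comp V E S \<le> 1" using nc_E[OF SV] C0 \<open>card I \<le> 1\<close> by simp
    then show "real (num_comp V E S) \<le> real (card S) / 1" using cS by (simp add: cutset_def)
  qed
  then have "1 \<le> t" using sup by simp
  then show False using thalf by simp
qed

lemma has_nbr: "y \<in> I \<Longrightarrow> \<exists>x. {x,y} \<in> E"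
proof (rule ccontr)
  assume y: "y \<in> I" and no: "\<nexists>x. {x, y} \<in> E"
  then have "y \<in> Z E {}" by (auto simp: Z_def)
  then have "card (Z E {}) \<ge> 1" using finZ by (metis One_nat_def Suc_leI card_gt_0_iff empty_iff)
  then have nc: "num_comp V E {} \<ge> 2" using nc_E[of "{}"] C_ne by simp
  then have "cutset V E {}" by (simp add: cutset_def)
  from tough_use[OF this] have "t * real (num_comp V E {}) \<le> 0" by simp
  then show False using tpos nc by (simp add: mult_le_0_iff)
qed

lemma deg_le1:
  assumes y: "y \<in> I" and e1: "{u,y} \<in> E" and e2: "{w,y} \<in> E"
  shows "u = w"
proof (rule ccontr)
  assume uw: "u \<noteq> w"
  have u: "u \<in> C" and w: "w \<in> C" using nbr_C y e1 e2 by auto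
  obtain S where SV: "S \<subseteq> V" and uS: "u \<notin> S" and wS: "w \<notin> S" and TS: "C - {u,w} \<subseteq> S"
    and vS: "\<forall>v\<in>I. {u,v} \<in> E \<longrightarrow> {w,v} \<in> E \<longrightarrow> v \<in> S"
    and lt: "real (card S) < t * (2 + real (card (Z E S)))"
    using edge_lemma[OF u w uw] by blast
  define T where "T = C - {u,w}"
  have yS: "y \<in> S" using vS y e1 e2 by auto
  have ZST: "Z E S \<subseteq> Z E T"
  proof
    fix z assume z: "z \<in> Z E S"
    then have zI: "z \<in> I" by (simp add: Z_def)
    have "z \<notin> T" using zI disj by (auto simp: T_def)
    moreover have "{x,z} \<notin> E" if "x \<in> V - T" for x
    proof
      assume xz: "{x,z} \<in> E"
      then have "x \<in> C" using nbr_C zI by auto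
      then have "x \<in> {u,w}" using that by (auto simp: T_def)
      then have "x \<in> V - S" using uS wS u w VCI by auto
      then show False using z xz by (auto simp: Z_def)
    qed
    ultimately show "z \<in> Z E T" using zI by (auto simp: Z_def)
  qed
  have zle: "card (Z E S) \<le> card (Z E T)" by (rule card_mono[OF finZ ZST])
  have "insert y T \<subseteq> S" using yS TS by (auto simp: T_def)
  moreover have "y \<notin> T" using y disj by (auto simp: T_def)
  ultimately have cS: "card T + 1 \<le> card S"
    using card_mono[of S "insert y T"] finV SV finC
    by (metis One_nat_def add.right_neutral add_Suc_right card_insert_disjoint finite_Diff T_def rev_finite_subset)
  have TV: "T \<subseteq> V" using VCI by (auto simp: T_def)
  have ncT: "num_comp V E T = 1 + card (Z E T)" using nc_E[OF TV] u by (auto simp: T_def)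
  show False
  proof (cases "Z E T = {}")
    case True
    then have "card (Z E S) = 0" using zle by simp
    then show False using lt cS thalf by simp
  next
    case False
    then have "card (Z E T) \<ge> 1" using finZ by (simp add: Suc_le_eq card_gt_0_iff)
    then have "cutset V E T" using ncT TV by (simp add: cutset_def)
    from tough_use[OF this] have h: "t * (1 + real (card (Z E T))) \<le> real (card T)" using ncT by simp
    have "t * (2 + real (card (Z E S))) \<le> t * (2 + real (card (Z E T)))"
      using zle tpos by (intro mult_left_mono) auto
    then show False using lt cS h thalf by (simp add: algebra_simps)
  qed
qed

end

context mt begin

definition L :: "'a \<Rightarrow> 'a set" where "L x = {y \<in> I. {x,y} \<in> E}"
definition lc :: "'a \<Rightarrow> nat" where "lc x = card (L x)"
definition mm :: nat where "mm = Max (lc ` C)"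

lemma lc_le: "x \<in> C \<Longrightarrow> lc x \<le> mm"
  unfolding mm_def using finC by (intro Max_ge) auto

lemma mm_att: "\<exists>x0\<in>C. lc x0 = mm"
proof -
  have "mm \<in> lc ` C" unfolding mm_def using finC C_ne by (intro Max_in) auto
  then show ?thesis by auto
qed

lemma Z_sub: "Z E S \<subseteq> (\<Union>x\<in>C \<inter> S. L x)"
proof
  fix y assume y: "y \<in> Z E S"
  then have yI: "y \<in> I" by (simp add: Z_def)
  obtain x where x: "{x,y} \<in> E" using has_nbr[OF yI] by auto
  have xC: "x \<in> C" using nbr_C[OF yI x] .
  have "x \<in> V" using edge_props[OF x] by simp
  then have "x \<in> S" using y x unfolding Z_def by auto
  then show "y \<in> (\<Union>x\<in>C \<inter> S. L x)" using xC x yI by (auto simp: L_def)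
qed

lemma card_Z: "card (Z E S) \<le> mm * card (C \<inter> S)"
proof -
  have "card (Z E S) \<le> card (\<Union>x\<in>C \<inter> S. L x)"
  proof (rule card_mono[OF _ Z_sub])
    have "(\<Union>x\<in>C \<inter> S. L x) \<subseteq> I" by (auto simp: L_def)
    then show "finite (\<Union>x\<in>C \<inter> S. L x)" using finI by (rule finite_subset)
  qed
  also have "\<dots> \<le> (\<Sum>x\<in>C \<inter> S. card (L x))" by (rule card_UN_le) (use finC in auto)
  also have "\<dots> \<le> (\<Sum>x\<in>C \<inter> S. mm)"
    by (rule sum_mono) (use lc_le in \<open>auto simp: lc_def\<close>)
  finally show ?thesis by (simp add: mult.commute)
qed

lemma Z_single: "x \<in> C \<Longrightarrow> Z E {x} = L x"
proof
  assume xC: "x \<in> C"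
  show "Z E {x} \<subseteq> L x" using Z_sub[of "{x}"] xC by auto
  show "L x \<subseteq> Z E {x}"
  proof
    fix y assume y: "y \<in> L x"
    then have yI: "y \<in> I" and xy: "{x,y} \<in> E" by (auto simp: L_def)
    have "y \<noteq> x" using yI xC disj by auto
    moreover have "{z,y} \<notin> E" if "z \<in> V - {x}" for z
      using deg_le1[OF yI xy, of z] that by auto
    ultimately show "y \<in> Z E {x}" using yI by (auto simp: Z_def)
  qed
qed

lemma t_bound:
  assumes c2: "card C \<ge> 2" and xC: "x \<in> C"
  shows "t * (1 + real (lc x)) \<le> 1"
proof -
  have xV: "{x} \<subseteq> V" using xC VCI by auto
  have "\<not> C \<subseteq> {x}" using c2 card_mono[of "{x}" C] by auto
  then have nc: "num_comp V E {x} = 1 + lc x"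
    using nc_E[OF xV] Z_single[OF xC] by (simp add: lc_def)
  show ?thesis
  proof (cases "lc x = 0")
    case True then show ?thesis using thalf by simp
  next
    case False
    then have "cutset V E {x}" using nc xV by (simp add: cutset_def)
    from tough_use[OF this] show ?thesis using nc by simp
  qed
qed

lemma edge_lemma2:
  assumes u: "u \<in> C" and w: "w \<in> C" and uw: "u \<noteq> w"
  shows "real (card C) - 2 < t * (2 + real mm * (real (card C) - 2))"
proof -
  obtain S where SV: "S \<subseteq> V" and uS: "u \<notin> S" and wS: "w \<notin> S" and TS: "C - {u,w} \<subseteq> S"
    and lt: "real (card S) < t * (2 + real (card (Z E S)))"
    using edge_lemma[OF u w uw] by blast
  have CS: "C \<inter> S = C - {u,w}" using TS uS wS by auto
  have cT: "card (C - {u,w}) = card C - 2" using u w uw finC by (simp add: card_Diff_subset)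
  have "card (C - {u,w}) \<le> card S" using card_mono[OF _ TS] finV SV by (metis rev_finite_subset)
  then have a: "real (card C) - 2 \<le> real (card S)" using cT by linarith
  have c2: "card C \<ge> 2" using card_mono[of C "{u,w}"] uw u w finC by auto
  have rc: "real (card C - 2) = real (card C) - 2" using c2 by (simp add: of_nat_diff)
  have "card (Z E S) \<le> mm * (card C - 2)" using card_Z[of S] CS cT by simp
  then have "real (card (Z E S)) \<le> real mm * real (card C - 2)"
    by (metis of_nat_le_iff of_nat_mult)
  then have "real (card (Z E S)) \<le> real mm * (real (card C) - 2)" using rc by simp
  then have "t * (2 + real (card (Z E S))) \<le> t * (2 + real mm * (real (card C) - 2))"
    using tpos by (intro mult_left_mono) auto
  then show ?thesis using a lt by linarith
qed

end

lemma two_elems: "finite A \<Longrightarrow> card A \<ge> 2 \<Longrightarrow> \<exists>u w. u \<in> A \<and> w \<in> A \<and> u \<noteq> w"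
  using card_le_Suc0_iff_eq[of A] by auto

context mt begin

lemma c_le3: "card C \<le> 3"
proof (rule ccontr)
  assume "\<not> card C \<le> 3"
  then have c4: "card C \<ge> 4" by simp
  obtain u w where u: "u \<in> C" and w: "w \<in> C" and uw: "u \<noteq> w"
    using two_elems[OF finC] c4 by auto
  obtain x0 where x0: "x0 \<in> C" "lc x0 = mm" using mm_att by auto
  have tb: "t * (1 + real mm) \<le> 1" using t_bound[of x0] c4 x0 by simp
  define k where "k = real (card C) - 2"
  have k2: "k \<ge> 2" using c4 by (simp add: k_def)
  have lt: "k < t * (2 + real mm * k)" using edge_lemma2[OF u w uw] by (simp add: k_def)
  have "t * real mm \<le> 1 - t" using tb by (simp add: algebra_simps)
  then have "(t * real mm) * k \<le> (1 - t) * k" using k2 by (intro mult_right_mono) auto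
  moreover have "t * (2 + real mm * k) = 2 * t + (t * real mm) * k" by (simp add: algebra_simps)
  ultimately have "k * t < 2 * t" using lt by (simp add: algebra_simps)
  then have "k < 2" using tpos by simp
  then show False using k2 by simp
qed

lemma c3_eq:
  assumes c3: "card C = 3" and xC: "x \<in> C"
  shows "lc x = mm"
proof -
  have "card (C - {x}) = 2" using c3 xC finC by simp
  then obtain u w where uw: "C - {x} = {u,w}" "u \<noteq> w" by (auto simp: card_2_iff)
  then have u: "u \<in> C" and w: "w \<in> C" by auto
  obtain S where SV: "S \<subseteq> V" and uS: "u \<notin> S" and wS: "w \<notin> S" and TS: "C - {u,w} \<subseteq> S"
    and lt: "real (card S) < t * (2 + real (card (Z E S)))"
    using edge_lemma[OF u w uw(2)] by blast
  have xuw: "x \<notin> {u,w}" using uw by auto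
  have CS: "C \<inter> S = {x}"
  proof
    show "C \<inter> S \<subseteq> {x}"
    proof
      fix z assume z: "z \<in> C \<inter> S"
      then have "z \<notin> {u,w}" using uS wS by blast
      then have "z \<notin> C - {x}" using uw(1) by simp
      then show "z \<in> {x}" using z by blast
    qed
    show "{x} \<subseteq> C \<inter> S" using TS xC xuw by blast
  qed
  have "x \<in> S" using CS by auto
  moreover have "finite S" using SV finV by (rule rev_finite_subset[rotated])
  ultimately have "card S > 0" by (auto simp: card_gt_0_iff)
  then have "card S \<ge> 1" by simp
  have "Z E S \<subseteq> L x" using Z_sub[of S] CS by auto
  then have "card (Z E S) \<le> lc x" unfolding lc_def
    by (rule card_mono[rotated]) (use finI in \<open>auto simp: L_def\<close>)
  then have "t * (2 + real (card (Z E S))) \<le> t * (2 + real (lc x))"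
    using tpos by (intro mult_left_mono) auto
  moreover obtain x0 where x0: "x0 \<in> C" "lc x0 = mm" using mm_att by auto
  moreover have "t * (1 + real mm) \<le> 1" using t_bound[of x0] c3 x0 by simp
  ultimately have "t * (1 + real mm) < t * (2 + real (lc x))"
    using lt \<open>card S \<ge> 1\<close> by linarith
  then have "1 + real mm < 2 + real (lc x)" using tpos by simp
  then have "mm \<le> lc x" by linarith
  then show ?thesis using lc_le[OF xC] by simp
qed

lemma deg_I: "y \<in> I \<Longrightarrow> degree V E y = 1"
proof -
  assume yI: "y \<in> I"
  obtain x where x: "{x,y} \<in> E" using has_nbr[OF yI] by auto
  have "{u \<in> V. {u,y} \<in> E} = {x}"
  proof
    show "{u \<in> V. {u,y} \<in> E} \<subseteq> {x}"
    proof
      fix u assume "u \<in> {u \<in> V. {u,y} \<in> E}"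
      then have "{u,y} \<in> E" by simp
      then have "x = u" by (rule deg_le1[OF yI x])
      then show "u \<in> {x}" by simp
    qed
    show "{x} \<subseteq> {u \<in> V. {u,y} \<in> E}" using x edge_props[OF x] by simp
  qed
  then show ?thesis by (simp add: degree_def)
qed

lemma deg_C: "x \<in> C \<Longrightarrow> degree V E x = (card C - 1) + lc x"
proof -
  assume xC: "x \<in> C"
  have "{u \<in> V. {u,x} \<in> E} = (C - {x}) \<union> L x"
  proof
    show "{u \<in> V. {u,x} \<in> E} \<subseteq> (C - {x}) \<union> L x"
    proof
      fix u assume u: "u \<in> {u \<in> V. {u,x} \<in> E}"
      then have "u \<noteq> x" using edge_props by blast
      then show "u \<in> (C - {x}) \<union> L x" using u VCI by (auto simp: L_def insert_commute)
    qed
    show "(C - {x}) \<union> L x \<subseteq> {u \<in> V. {u,x} \<in> E}"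
      using cliq xC VCI by (auto simp: L_def insert_commute)
  qed
  moreover have "(C - {x}) \<inter> L x = {}" using disj by (auto simp: L_def)
  moreover have "finite (L x)" using finI by (auto simp: L_def)
  ultimately have "degree V E x = card (C - {x}) + card (L x)"
    unfolding degree_def using finC by (simp add: card_Un_disjoint)
  then show ?thesis using xC finC by (simp add: lc_def)
qed

definition bb :: nat where "bb = (if card C = 1 then mm else mm + 1)"

lemma tough_b: "tough (1 / real (max 1 bb)) V E"
  unfolding tough_def
proof (intro allI impI)
  fix S assume cS: "cutset V E S"
  then have SV: "S \<subseteq> V" and n2: "num_comp V E S \<ge> 2" by (auto simp: cutset_def)
  have nc: "num_comp V E S = (if C \<subseteq> S then 0 else 1) + card (Z E S)" using nc_E[OF SV] .
  have cz: "card (Z E S) \<le> mm * card (C \<inter> S)" by (rule card_Z)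
  have cCS: "card (C \<inter> S) \<le> card S" using SV finV by (intro card_mono) (auto intro: rev_finite_subset)
  have "num_comp V E S \<le> card S * max 1 bb"
  proof (cases "C \<subseteq> S")
    case True
    then have "num_comp V E S \<le> mm * card (C \<inter> S)" using nc cz by simp
    also have "\<dots> \<le> max 1 bb * card S" using cCS by (intro mult_mono) (auto simp: bb_def)
    finally show ?thesis by (simp add: mult.commute)
  next
    case False
    then have "card (Z E S) \<ge> 1" using nc n2 by simp
    then have k1: "card (C \<inter> S) \<ge> 1" using cz by (cases "card (C \<inter> S)") auto
    then have "C \<inter> S \<noteq> {}" by (metis card.empty not_one_le_zero)
    then obtain a where a: "a \<in> C \<inter> S" by blast
    obtain b where b: "b \<in> C" "b \<notin> S" using False by auto
    have "card C \<noteq> 1"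
    proof
      assume "card C = 1"
      then obtain c where "C = {c}" by (rule card_1_singletonE)
      then show False using a b by auto
    qed
    then have bb: "bb = mm + 1" by (simp add: bb_def)
    have "num_comp V E S \<le> 1 + mm * card (C \<inter> S)" using nc cz False by simp
    also have "\<dots> \<le> (mm + 1) * card (C \<inter> S)" using k1 by (simp add: algebra_simps)
    also have "\<dots> \<le> max 1 bb * card S" using cCS bb by (intro mult_mono) auto
    finally show ?thesis by (simp add: mult.commute)
  qed
  then have "real (num_comp V E S) \<le> real (card S) * real (max 1 bb)"
    by (metis of_nat_le_iff of_nat_mult)
  then show "real (num_comp V E S) \<le> real (card S) / (1 / real (max 1 bb))" by simp
qed

lemma bb_ge2: "bb \<ge> 2"
proof -
  have "1 / real (max 1 bb) \<le> t" using sup[OF _ tough_b] by simp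
  then have h: "1 / real (max 1 bb) \<le> 1 / 2" using thalf by linarith
  define r where "r = real (max 1 bb)"
  have rpos: "r > 0" by (simp add: r_def)
  have "1 / r \<le> 1 / 2" using h by (simp add: r_def)
  then have "2 \<le> r" using rpos by (simp add: field_simps)
  then show ?thesis unfolding r_def by linarith
qed

lemma t_eq: "t = 1 / real bb"
proof -
  have "1 / real (max 1 bb) \<le> t" using sup[OF _ tough_b] by simp
  then have a: "1 / real bb \<le> t" using bb_ge2 by (simp add: max_def)
  obtain x0 where x0: "x0 \<in> C" "lc x0 = mm" using mm_att by auto
  have xV: "{x0} \<subseteq> V" using x0 VCI by auto
  have "(C \<subseteq> {x0}) = (card C = 1)"
  proof
    assume "C \<subseteq> {x0}" then have "C = {x0}" using x0 by auto
    then show "card C = 1" by simp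
  next
    assume "card C = 1" then show "C \<subseteq> {x0}" using x0 by (auto simp: card_1_singleton_iff)
  qed
  then have nc: "num_comp V E {x0} = bb"
    using nc_E[OF xV] Z_single[OF x0(1)] x0 by (simp add: bb_def lc_def)
  then have "cutset V E {x0}" using xV bb_ge2 by (simp add: cutset_def)
  from tough_use[OF this] nc have "t * real bb \<le> 1" by simp
  then have "t \<le> 1 / real bb" using bb_ge2 by (simp add: field_simps)
  with a show ?thesis by simp
qed

end

context mt begin

lemma anchor: "x \<in> V \<Longrightarrow> \<exists>a\<in>C. reach_in V E x a"
proof -
  assume xV: "x \<in> V"
  show ?thesis
  proof (cases "x \<in> C")
    case True then show ?thesis by (intro bexI[of _ x]) (simp_all add: reach_refl)
  next
    case False
    then have yI: "x \<in> I" using xV VCI by auto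
    obtain a where a: "{a,x} \<in> E" using has_nbr[OF yI] by auto
    have "a \<in> C" using nbr_C[OF yI a] .
    moreover have "reach_in V E x a" using a edge_props[OF a]
      by (intro reach_edge) (auto simp: insert_commute)
    ultimately show ?thesis by blast
  qed
qed

lemma connected: "connected_graph V E"
  unfolding connected_graph_def
proof (intro conjI ballI)
  show "V \<noteq> {}" using C_ne VCI by auto
  fix x y assume x: "x \<in> V" and y: "y \<in> V"
  obtain a where a: "a \<in> C" "reach_in V E x a" using anchor[OF x] by auto
  obtain b where b: "b \<in> C" "reach_in V E y b" using anchor[OF y] by auto
  have "reach_in V E a b"
  proof (cases "a = b")
    case True then show ?thesis by (simp add: reach_refl)
  next
    case False then show ?thesis using a b cliq VCI by (intro reach_edge) auto
  qed
  then show "reach_in V E x y" using a b reach_trans reach_sym by metis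
qed

lemma two_nbrs_C: "v \<in> V \<Longrightarrow> {a,v} \<in> E \<Longrightarrow> {b,v} \<in> E \<Longrightarrow> a \<noteq> b \<Longrightarrow> v \<in> C"
  using deg_le1 VCI by blast

lemma no_cycle:
  assumes c2: "card C \<le> 2"
  shows "\<not> is_cycle V E xs"
proof
  assume cyc: "is_cycle V E xs"
  then have n3: "length xs \<ge> 3" and dist: "distinct xs" and sub: "set xs \<subseteq> V"
    and st: "\<And>i. Suc i < length xs \<Longrightarrow> {xs ! i, xs ! Suc i} \<in> E"
    and cl: "{last xs, hd xs} \<in> E" by (auto simp: is_cycle_def)
  have ne: "xs \<noteq> []" using n3 by (cases xs) auto
  have inV: "\<And>i. i < length xs \<Longrightarrow> xs ! i \<in> V" using sub by auto
  have neq: "\<And>i j. i < length xs \<Longrightarrow> j < length xs \<Longrightarrow> i \<noteq> j \<Longrightarrow> xs ! i \<noteq> xs ! j"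
    using dist by (simp add: nth_eq_iff_index_eq)
  have lst: "last xs = xs ! (length xs - 1)" using ne by (simp add: last_conv_nth)
  have hd: "hd xs = xs ! 0" using ne by (simp add: hd_conv_nth)
  have e01: "{xs!0, xs!1} \<in> E" using st[of 0] n3 by simp
  have e12: "{xs!1, xs!2} \<in> E" using st[of 1] n3 by (simp add: numeral_2_eq_2)
  have c0: "xs ! 0 \<in> C"
  proof (rule two_nbrs_C[of _ "xs!1" "xs ! (length xs - 1)"])
    show "xs ! 0 \<in> V" by (rule inV) (use n3 in linarith)
    show "{xs!1, xs!0} \<in> E" using e01 by (simp add: insert_commute)
    show "{xs ! (length xs - 1), xs!0} \<in> E" using cl lst hd by simp
    show "xs ! 1 \<noteq> xs ! (length xs - 1)" by (rule neq) (use n3 in linarith)+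
  qed
  have c1: "xs ! 1 \<in> C"
  proof (rule two_nbrs_C[of _ "xs!0" "xs!2"])
    show "xs ! 1 \<in> V" by (rule inV) (use n3 in linarith)
    show "{xs!0, xs!1} \<in> E" using e01 .
    show "{xs!2, xs!1} \<in> E" using e12 by (simp add: insert_commute)
    show "xs ! 0 \<noteq> xs ! 2" by (rule neq) (use n3 in linarith)+
  qed
  have c2': "xs ! 2 \<in> C"
  proof (cases "length xs = 3")
    case True
    show ?thesis
    proof (rule two_nbrs_C[of _ "xs!1" "xs!0"])
      show "xs ! 2 \<in> V" by (rule inV) (use n3 in linarith)
      show "{xs!1, xs!2} \<in> E" using e12 .
      show "{xs!0, xs!2} \<in> E" using cl lst hd True by (simp add: insert_commute)
      show "xs ! 1 \<noteq> xs ! 0" by (rule neq) (use n3 in linarith)+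
    qed
  next
    case False
    then have n4: "length xs > 3" using n3 by simp
    have e23: "{xs!2, xs!3} \<in> E" using st[of 2] n4 by (simp add: numeral_3_eq_3)
    show ?thesis
    proof (rule two_nbrs_C[of _ "xs!1" "xs!3"])
      show "xs ! 2 \<in> V" by (rule inV) (use n3 in linarith)
      show "{xs!1, xs!2} \<in> E" using e12 .
      show "{xs!3, xs!2} \<in> E" using e23 by (simp add: insert_commute)
      show "xs ! 1 \<noteq> xs ! 3" by (rule neq) (use n4 in linarith)+
    qed
  qed
  have "{xs!0, xs!1, xs!2} \<subseteq> C" using c0 c1 c2' by simp
  moreover have "card {xs!0, xs!1, xs!2} = 3"
  proof -
    have "xs!0 \<noteq> xs!1" "xs!0 \<noteq> xs!2" "xs!1 \<noteq> xs!2" by (rule neq; use n3 in linarith)+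
    then show ?thesis by simp
  qed
  ultimately have "3 \<le> card C" using finC by (metis card_mono)
  then show False using c2 by simp
qed

lemma internal_sub: "internal_vertices V E \<subseteq> C"
  using deg_I VCI by (auto simp: internal_vertices_def)

lemma maxdeg:
  assumes c2: "card C \<le> 2"
  shows "max_degree V E = bb"
  unfolding max_degree_def
proof (rule Max_eqI)
  show "finite (degree V E ` V)" using finV by simp
  have cpos: "card C \<ge> 1" using C_ne finC by (simp add: Suc_le_eq card_gt_0_iff)
  have key: "card C - 1 + mm = bb" using c2 cpos by (auto simp: bb_def)
  show "y \<le> bb" if yin: "y \<in> degree V E ` V" for y
  proof -
    obtain v where v: "v \<in> V" "y = degree V E v" using yin by blast
    show ?thesis
    proof (cases "v \<in> C")
      case True
      then show ?thesis using deg_C[OF True] lc_le[OF True] key v by simp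
    next
      case False
      then have "v \<in> I" using v VCI by auto
      then show ?thesis using deg_I bb_ge2 v by simp
    qed
  qed
  obtain x0 where x0: "x0 \<in> C" "lc x0 = mm" using mm_att by auto
  then have "degree V E x0 = bb" using deg_C key by simp
  then show "bb \<in> degree V E ` V" using x0 VCI by (metis UnI1 image_eqI)
qed

lemma main_concl:
  "\<exists>b::nat. b > 0 \<and> t = 1 / real b \<and> card C \<le> 3 \<and>
           ((is_tree V E \<and> card (internal_vertices V E) \<le> 2 \<and> max_degree V E = b) \<or>
            (card C = 3 \<and> (\<forall>v\<in>I. degree V E v = 1) \<and> (\<forall>v\<in>C. degree V E v = b + 1)))"
proof (rule exI[of _ bb], intro conjI)
  show "bb > 0" using bb_ge2 by simp
  show "t = 1 / real bb" by (rule t_eq)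
  show "card C \<le> 3" by (rule c_le3)
  show "(is_tree V E \<and> card (internal_vertices V E) \<le> 2 \<and> max_degree V E = bb) \<or>
            (card C = 3 \<and> (\<forall>v\<in>I. degree V E v = 1) \<and> (\<forall>v\<in>C. degree V E v = bb + 1))"
  proof (cases "card C \<le> 2")
    case True
    have "is_tree V E" using connected no_cycle[OF True] by (simp add: is_tree_def)
    moreover have "card (internal_vertices V E) \<le> 2"
      using card_mono[OF finC internal_sub] True by simp
    ultimately show ?thesis using maxdeg[OF True] by simp
  next
    case False
    then have c3: "card C = 3" using c_le3 by simp
    have "\<forall>v\<in>C. degree V E v = bb + 1"
      using deg_C c3_eq[OF c3] c3 by (simp add: bb_def)
    then show ?thesis using c3 deg_I by simp
  qed
qed

end

lemma le_toughness: "t' > 0 \<Longrightarrow> tough t' V E \<Longrightarrow> ereal t' \<le> toughness V E"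
  unfolding toughness_def by (rule Sup_upper) auto

lemma tough_of_toughness:
  assumes tt: "toughness V E = ereal t" and tpos: "t > 0"
  shows "tough t V E"
  unfolding tough_def
proof (intro allI impI)
  fix S assume cS: "cutset V E S"
  then have n2: "num_comp V E S \<ge> 2" by (simp add: cutset_def)
  show "real (num_comp V E S) \<le> real (card S) / t"
  proof (rule ccontr)
    assume "\<not> real (num_comp V E S) \<le> real (card S) / t"
    then have "real (card S) / t < real (num_comp V E S)" by simp
    then have gt: "real (card S) < t * real (num_comp V E S)" using tpos
      by (simp add: divide_less_eq mult.commute)
    define q where "q = real (card S) / real (num_comp V E S)"
    have npos: "real (num_comp V E S) > 0" using n2 by simp
    have qt: "q < t" using gt npos by (simp add: q_def pos_divide_less_eq mult.commute)
    have q0: "q \<ge> 0" by (simp add: q_def)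
    have "ereal q < Sup ({0} \<union> {ereal t | t. t > 0 \<and> tough t V E})"
      using tt qt unfolding toughness_def by simp
    then have "\<exists>x \<in> {0} \<union> {ereal t | t. t > 0 \<and> tough t V E}. ereal q < x"
      by (rule less_Sup_iff[THEN iffD1])
    then obtain x where x: "x \<in> {0} \<union> {ereal t | t. t > 0 \<and> tough t V E}" "ereal q < x"
      by blast
    show False
    proof (cases "x = 0")
      case True then show False using x q0 by (simp add: zero_ereal_def)
    next
      case False
      then obtain t'' where t'': "x = ereal t''" "t'' > 0" "tough t'' V E" using x by auto
      then have "real (num_comp V E S) \<le> real (card S) / t''" using cS by (simp add: tough_def)
      then have "t'' * real (num_comp V E S) \<le> real (card S)" using t'' by (simp add: pos_le_divide_eq mult.commute)
      then have "t'' \<le> q" using npos by (simp add: q_def pos_le_divide_eq)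
      then show False using x t'' by simp
    qed
  qed
qed

theorem mainTheorem6:
  fixes V :: "'a set" and E :: "'a set set" and C I :: "'a set" and t :: real
  assumes "graph V E"
    and "t \<in> \<rat>" and "t > 0" and "t \<le> 1/2"
    and "split_partition V E C I"
    and "minimally_tough t V E"
  shows "\<exists>b::nat. b > 0 \<and> t = 1 / real b \<and> card C \<le> 3 \<and>
           ((is_tree V E \<and> card (internal_vertices V E) \<le> 2 \<and> max_degree V E = b) \<or>
            (card C = 3 \<and> (\<forall>v\<in>I. degree V E v = 1) \<and> (\<forall>v\<in>C. degree V E v = b + 1)))"
proof -
  have tt: "toughness V E = ereal t" and mn: "\<forall>e\<in>E. toughness V (E - {e}) < ereal t"
    using assms(6) by (simp_all add: minimally_tough_def)
  interpret mt V E C I t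
  proof (unfold_locales)
    show "graph V E" by (rule assms(1))
    show "split_partition V E C I" by (rule assms(5))
    show "t > 0" by (rule assms(3))
    show "t \<le> 1/2" by (rule assms(4))
    show "tough t V E" by (rule tough_of_toughness[OF tt assms(3)])
    show "t' \<le> t" if "t' > 0" "tough t' V E" for t'
      using le_toughness[OF that] tt by simp
    show "\<exists>S. cutset V (E - {e}) S \<and> real (card S) < t * real (num_comp V (E - {e}) S)"
      if eE: "e \<in> E" for e
    proof (rule ccontr)
      assume no: "\<not> ?thesis"
      have "tough t V (E - {e})"
        unfolding tough_def
      proof (intro allI impI)
        fix S assume "cutset V (E - {e}) S"
        then have "t * real (num_comp V (E - {e}) S) \<le> real (card S)" using no by auto
        then show "real (num_comp V (E - {e}) S) \<le> real (card S) / t"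
          using assms(3) by (simp add: pos_le_divide_eq mult.commute)
      qed
      from le_toughness[OF assms(3) this] have "ereal t \<le> toughness V (E - {e})" .
      then show False using mn eE by (meson leD)
    qed
  qed
  show ?thesis by (rule main_concl)
qed

end
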